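(* Let $u$ be a non-trivial u-p-word for $n$-permutations, and let $f$ be the number of occurrences of $\Diamond$ in $u$. Then $n\leq 3f+1$.
   Context: An $n$-permutation is a permutation of $\{1,\ldots,n\}$. For a word $w$ of distinct numbers, $\mathrm{red}(w)$ is obtained by replacing the $i$-th smallest letter by $i$. Let $\Diamond$ be a symbol not among the integers. A word $f_1\cdots f_n$ over the positive integers together with $\Diamond$, whose integer letters are pairwise distinct, covers an $n$-permutation $\pi$ if one can substitute real numbers for the occurrences of $\Diamond$ (independently) so that the resulting word has $n$ pairwise distinct entries and reduces to $\pi$; equivalently, $f_i<f_j\iff\pi_i<\pi_j$ for all positions $i,j$ holding integers. A u-p-word for $n$-permutations is a word $u_1\cdots u_N$, $N\geq n$, over this alphabet containing at least one $\Diamond$, such that every factor $u_i\cdots u_{i+n-1}$ ($1\leq i\leq N-n+1$) has pairwise distinct integer letters and every $n$-permutation is covered by exactly one of these factors. A u-p-word is trivial if all of its letters are $\Diamond$. *)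

theory Defs
  imports Complex_Main
begin

text \<open>Letters: None is the hole symbol (Diamond), Some k is the positive integer k.\<close>
type_synonym letter = "nat option"

definition is_perm :: "nat \<Rightarrow> nat list \<Rightarrow> bool" where
  "is_perm n \<pi> \<longleftrightarrow> length \<pi> = n \<and> distinct \<pi> \<and> set \<pi> = {1..n}"

definition distinct_ints :: "letter list \<Rightarrow> bool" where
  "distinct_ints w \<longleftrightarrow> (\<forall>i<length w. \<forall>j<length w. i \<noteq> j \<longrightarrow>
      w ! i \<noteq> None \<longrightarrow> w ! i \<noteq> w ! j)"

definition covers :: "letter list \<Rightarrow> nat list \<Rightarrow> bool" where
  "covers w \<pi> \<longleftrightarrow> length w = length \<pi> \<and>
     (\<exists>x :: nat \<Rightarrow> real.
        (\<forall>i<length w. \<forall>k. w ! i = Some k \<longrightarrow> x i = real k) \<and>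
        inj_on x {..<length w} \<and>
        (\<forall>i<length w. \<forall>j<length w. x i < x j \<longleftrightarrow> \<pi> ! i < \<pi> ! j))"

definition factor :: "letter list \<Rightarrow> nat \<Rightarrow> nat \<Rightarrow> letter list" where
  "factor u n i = take n (drop i u)"

definition up_word :: "nat \<Rightarrow> letter list \<Rightarrow> bool" where
  "up_word n u \<longleftrightarrow>
     length u \<ge> n \<and> None \<in> set u \<and> (\<forall>k. Some k \<in> set u \<longrightarrow> k > 0) \<and>
     (\<forall>i. i + n \<le> length u \<longrightarrow> distinct_ints (factor u n i)) \<and>
     (\<forall>\<pi>. is_perm n \<pi> \<longrightarrow>
        card {i. i + n \<le> length u \<and> covers (factor u n i) \<pi>} = 1)"

definition trivial_word :: "letter list \<Rightarrow> bool" where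
  "trivial_word u \<longleftrightarrow> (\<forall>a\<in>set u. a = None)"

end

theory Submission
  imports Defs
begin


definition cp :: "letter list \<Rightarrow> nat \<Rightarrow> nat \<Rightarrow> (nat \<Rightarrow> real) \<Rightarrow> bool" where
  "cp u n i y \<longleftrightarrow> (\<forall>j<n. \<forall>k<n. \<forall>a b. u!(i+j) = Some a \<longrightarrow> u!(i+k) = Some b \<longrightarrow> a < b \<longrightarrow> y j < y k)"

lemma cpD: "cp u n i y \<Longrightarrow> j < n \<Longrightarrow> k < n \<Longrightarrow> u!(i+j) = Some a \<Longrightarrow> u!(i+k) = Some b \<Longrightarrow> a < b \<Longrightarrow> y j < y k"
  unfolding cp_def by blast

lemma cp_cong: "(\<And>j. j < n \<Longrightarrow> y j = y' j) \<Longrightarrow> cp u n i y = cp u n i y'"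
  unfolding cp_def by auto

lemma gap:
  fixes L U E :: "real set"
  assumes "finite L" "finite U" "finite E" "\<And>l h. l \<in> L \<Longrightarrow> h \<in> U \<Longrightarrow> l < h"
  shows "\<exists>z. (\<forall>l\<in>L. l < z) \<and> (\<forall>h\<in>U. z < h) \<and> z \<notin> E"
proof -
  define a where "a = (if L = {} then Min (insert 0 U) - 1 else Max L)"
  define b where "b = (if U = {} then a + 1 else Min U)"
  have aL: "\<forall>l\<in>L. l \<le> a" using assms(1) by (auto simp: a_def)
  have aU: "\<forall>h\<in>U. a < h"
  proof
    fix h assume h: "h \<in> U"
    show "a < h"
    proof (cases "L = {}")
      case True
      have "Min (insert 0 U) \<le> h" using h assms(2) by (simp add: Min_le_iff)
      then show ?thesis using True by (simp add: a_def)
    next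
      case False
      then show ?thesis using h assms(1,4) by (auto simp: a_def)
    qed
  qed
  have ab: "a < b" using aU assms(2) by (auto simp: b_def)
  have bU: "\<forall>h\<in>U. b \<le> h" using assms(2) by (auto simp: b_def)
  define b' where "b' = Min (insert b {e\<in>E. a < e})"
  have fin: "finite (insert b {e\<in>E. a < e})" using assms(3) by auto
  have ab': "a < b'" using fin ab by (auto simp: b'_def)
  have b'b: "b' \<le> b" using fin by (auto simp: b'_def)
  have b'E: "\<forall>e\<in>E. a < e \<longrightarrow> b' \<le> e" using fin by (auto simp: b'_def)
  define z where "z = (a + b') / 2"
  have "\<forall>l\<in>L. l < z" using aL ab' by (auto simp: z_def)
  moreover have "\<forall>h\<in>U. z < h" using bU b'b ab' by (fastforce simp: z_def)
  moreover have "z \<notin> E"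
  proof
    assume "z \<in> E"
    moreover have "a < z" using ab' by (simp add: z_def)
    ultimately have "b' \<le> z" using b'E by auto
    then show False using ab' by (simp add: z_def)
  qed
  ultimately show ?thesis by (intro exI[of _ z]) simp
qed

locale UW =
  fixes n :: nat and u :: "letter list"
  assumes len: "n \<le> length u"
  and dist: "\<And>i j k a. i + n \<le> length u \<Longrightarrow> j < n \<Longrightarrow> k < n \<Longrightarrow> j \<noteq> k \<Longrightarrow>
       u!(i+j) = Some a \<Longrightarrow> u!(i+k) \<noteq> Some a"
  and U1: "\<And>y. inj_on y {..<n} \<Longrightarrow> \<exists>i. i + n \<le> length u \<and> cp u n i y"
  and U2: "\<And>y i i'. inj_on y {..<n} \<Longrightarrow> i + n \<le> length u \<Longrightarrow> i' + n \<le> length u \<Longrightarrow>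
       cp u n i y \<Longrightarrow> cp u n i' y \<Longrightarrow> i = i'"
begin

lemma S1:
  assumes p: "u!p = None" "p + n < length u" and n1: "1 \<le> n"
  and y: "inj_on y {..<n}"
  and W: "\<And>j k a b. j < n-1 \<Longrightarrow> k < n-1 \<Longrightarrow> u!(p+1+j) = Some a \<Longrightarrow> u!(p+1+k) = Some b \<Longrightarrow> a < b \<Longrightarrow> y j < y k"
  and i: "i + n \<le> length u" "cp u n i y"
  shows "i = 0 \<or> i = p + 1"
proof (rule ccontr)
  assume ne: "\<not> (i = 0 \<or> i = p + 1)"
  define Lo where "Lo = {y k | k. k < n-1 \<and> (\<exists>b c'. u!(i-1) = Some c' \<and> u!(i+k) = Some b \<and> b < c')}"
  define Up where "Up = {y k | k. k < n-1 \<and> (\<exists>b c'. u!(i-1) = Some c' \<and> u!(i+k) = Some b \<and> c' < b)}"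
  have "\<exists>z. (\<forall>l\<in>Lo. l < z) \<and> (\<forall>h\<in>Up. z < h) \<and> z \<notin> y ` {..<n-1}"
  proof (rule gap)
    show "finite Lo" unfolding Lo_def by auto
    show "finite Up" unfolding Up_def by auto
    show "finite (y ` {..<n-1})" by auto
    fix l h assume "l \<in> Lo" "h \<in> Up"
    then obtain k k' b b' c' where "l = y k" "h = y k'" "k < n-1" "k' < n-1"
      "u!(i+k) = Some b" "u!(i+k') = Some b'" "b < c'" "c' < b'"
      unfolding Lo_def Up_def by auto
    moreover have "k < n" "k' < n" "b < b'" using \<open>k < n-1\<close> \<open>k' < n-1\<close> \<open>b < c'\<close> \<open>c' < b'\<close> by auto
    ultimately show "l < h" using i(2) unfolding cp_def by blast
  qed
  then obtain z0 where z0: "\<forall>l\<in>Lo. l < z0" "\<forall>h\<in>Up. z0 < h" "z0 \<notin> y ` {..<n-1}" by blast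
  define z where "z = (\<lambda>j. if j = 0 then z0 else y (j - 1))"
  have injz: "inj_on z {..<n}"
  proof (rule inj_onI)
    fix j k assume jk: "j \<in> {..<n}" "k \<in> {..<n}" "z j = z k"
    show "j = k"
    proof (cases "j = 0"; cases "k = 0")
      assume "j = 0" "k \<noteq> 0" then show ?thesis using jk z0(3) by (auto simp: z_def)
    next
      assume "j \<noteq> 0" "k = 0" then show ?thesis using jk z0(3) by (auto simp: z_def)
    next
      assume "j \<noteq> 0" "k \<noteq> 0"
      then have "y (j-1) = y (k-1)" using jk by (simp add: z_def)
      moreover have "j - 1 \<in> {..<n}" "k - 1 \<in> {..<n}" using jk by auto
      ultimately have "j - 1 = k - 1" using y by (meson inj_onD)
      then show ?thesis using \<open>j \<noteq> 0\<close> \<open>k \<noteq> 0\<close> by simp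
    qed simp
  qed
  have cpp: "cp u n p z"
    unfolding cp_def
  proof (intro allI impI)
    fix j k a b assume jk: "j < n" "k < n" "u!(p+j) = Some a" "u!(p+k) = Some b" "a < b"
    have "j \<noteq> 0" using p(1) jk(3) by (cases j) auto
    have "k \<noteq> 0" using p(1) jk(4) by (cases k) auto
    then show "z j < z k" using W[of "j-1" "k-1" a b] jk \<open>j \<noteq> 0\<close> by (simp add: z_def)
  qed
  have cpi: "cp u n (i-1) z"
    unfolding cp_def
  proof (intro allI impI)
    fix j k a b assume jk: "j < n" "k < n" "u!(i-1+j) = Some a" "u!(i-1+k) = Some b" "a < b"
    have i0: "i \<ge> 1" using ne by auto
    show "z j < z k"
    proof (cases "j = 0"; cases "k = 0")
      assume "j = 0" "k = 0" then show ?thesis using jk by simp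
    next
      assume a: "j = 0" "k \<noteq> 0"
      then have "u!(i+(k-1)) = Some b" "u!(i-1) = Some a" using jk i0 by auto
      then have "y (k-1) \<in> Up" using jk a unfolding Up_def by fastforce
      then show ?thesis using z0 a by (simp add: z_def)
    next
      assume a: "j \<noteq> 0" "k = 0"
      then have "u!(i+(j-1)) = Some a" "u!(i-1) = Some b" using jk i0 by auto
      then have "y (j-1) \<in> Lo" using jk a unfolding Lo_def by fastforce
      then show ?thesis using z0 a by (simp add: z_def)
    next
      assume a: "j \<noteq> 0" "k \<noteq> 0"
      then have "u!(i+(j-1)) = Some a" "u!(i+(k-1)) = Some b" using jk i0 by auto
      then have "y (j-1) < y (k-1)" using i(2) jk a unfolding cp_def by auto
      then show ?thesis using a by (simp add: z_def)
    qed
  qed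
  have "p = i - 1" using U2[OF injz _ _ cpp cpi] p i ne by auto
  then show False using ne by auto
qed


lemma FR_main:
  assumes p: "u!p = None" "p + n < length u" and n2: "2 \<le> n"
  and c: "u!(p+n) = Some c"
  and G: "g < n-1" "u!(p+1+g) = Some bg" "c < bg"
  shows "\<forall>a b. a < n-1 \<longrightarrow> b < n-1 \<longrightarrow> u!a \<noteq> None \<longrightarrow> u!b \<noteq> None \<longrightarrow> a = b"
proof -
  define M where "M = Max (insert 0 {a. Some a \<in> set u})"
  have finS: "finite {a. Some a \<in> set u}"
    by (rule finite_subset[of _ "the ` set u"]) force+
  have Mge: "\<And>t a. t < length u \<Longrightarrow> u!t = Some a \<Longrightarrow> a \<le> M"
  proof -
    fix t a assume "t < length u" "u!t = Some a"
    then have "Some a \<in> set u" by (metis nth_mem)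
    then show "a \<le> M" unfolding M_def using finS by (intro Max_ge) auto
  qed
  define \<tau> where "\<tau> j = (case u!(p+1+j) of Some a \<Rightarrow> real a | None \<Rightarrow> real M + 1 + real j)" for j
  define ext where "ext v = (\<lambda>j. if j = n-1 then v else \<tau> j)" for v
  define T where "T = \<tau> ` {..<n-1}"
  have finT: "finite T" unfolding T_def by auto
  have win: "p + 1 + n \<le> length u" using p by auto
  have \<tau>inj: "inj_on \<tau> {..<n-1}"
  proof (rule inj_onI)
    fix j k assume jk: "j \<in> {..<n-1}" "k \<in> {..<n-1}" "\<tau> j = \<tau> k"
    show "j = k"
    proof (cases "u!(p+1+j)"; cases "u!(p+1+k)")
      fix a b assume ab: "u!(p+1+j) = Some a" "u!(p+1+k) = Some b"
      then have "a = b" using jk by (simp add: \<tau>_def)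
      then show ?thesis using dist[OF win, of j k a] ab jk by force
    next
      fix a assume ab: "u!(p+1+j) = Some a" "u!(p+1+k) = None"
      have "a \<le> M" using Mge[OF _ ab(1)] win jk by auto
      then show ?thesis using ab jk by (simp add: \<tau>_def)
    next
      fix b assume ab: "u!(p+1+j) = None" "u!(p+1+k) = Some b"
      have "b \<le> M" using Mge[OF _ ab(2)] win jk by auto
      then show ?thesis using ab jk by (simp add: \<tau>_def)
    next
      assume "u!(p+1+j) = None" "u!(p+1+k) = None"
      then show ?thesis using jk by (simp add: \<tau>_def)
    qed
  qed
  have \<tau>W: "\<And>j k a b. j<n-1 \<Longrightarrow> k<n-1 \<Longrightarrow> u!(p+1+j) = Some a \<Longrightarrow> u!(p+1+k) = Some b \<Longrightarrow> a<b \<Longrightarrow> \<tau> j < \<tau> k"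
    by (simp add: \<tau>_def)
  have \<tau>val: "\<And>j a. u!(p+1+j) = Some a \<Longrightarrow> \<tau> j = real a" by (simp add: \<tau>_def)
  have ext_inj: "\<And>v. v \<notin> T \<Longrightarrow> inj_on (ext v) {..<n}"
  proof -
    fix v assume v: "v \<notin> T"
    show "inj_on (ext v) {..<n}"
    proof (rule inj_onI)
      fix j k assume jk: "j \<in> {..<n}" "k \<in> {..<n}" "ext v j = ext v k"
      show "j = k"
      proof (cases "j = n-1"; cases "k = n-1")
        assume "j = n-1" "k \<noteq> n-1" then show ?thesis using jk v by (auto simp: ext_def T_def)
      next
        assume "j \<noteq> n-1" "k = n-1" then show ?thesis using jk v by (auto simp: ext_def T_def)
      next
        assume "j \<noteq> n-1" "k \<noteq> n-1"
        then show ?thesis using jk \<tau>inj by (auto simp: ext_def inj_on_def)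
      qed simp
    qed
  qed
  have XOR: "\<And>v. v \<notin> T \<Longrightarrow> cp u n 0 (ext v) \<longleftrightarrow> \<not> cp u n (p+1) (ext v)"
  proof -
    fix v assume v: "v \<notin> T"
    obtain i where i: "i + n \<le> length u" "cp u n i (ext v)" using U1[OF ext_inj[OF v]] by blast
    have "i = 0 \<or> i = p + 1"
      by (rule S1[OF p _ ext_inj[OF v] _ i]) (use n2 in \<open>auto simp: ext_def intro: \<tau>W\<close>)
    moreover have "\<not> (cp u n 0 (ext v) \<and> cp u n (p+1) (ext v))"
      using U2[OF ext_inj[OF v], of 0 "p+1"] len win by auto
    ultimately show "cp u n 0 (ext v) \<longleftrightarrow> \<not> cp u n (p+1) (ext v)" using i by auto
  qed
  have lastc: "u!(p+1+(n-1)) = Some c" using c n2 by (simp add: add.commute add.left_commute)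
  have cpP: "\<And>v. cp u n (p+1) (ext v) \<longleftrightarrow>
      (\<forall>j<n-1. \<forall>b. u!(p+1+j) = Some b \<longrightarrow> (b < c \<longrightarrow> \<tau> j < v) \<and> (c < b \<longrightarrow> v < \<tau> j))"
  proof -
    fix v
    show "?thesis v"
    proof
      assume h: "cp u n (p+1) (ext v)"
      show "\<forall>j<n-1. \<forall>b. u!(p+1+j) = Some b \<longrightarrow> (b < c \<longrightarrow> \<tau> j < v) \<and> (c < b \<longrightarrow> v < \<tau> j)"
      proof (intro allI impI conjI)
        fix j b assume j: "j < n-1" "u!(p+1+j) = Some b"
        { assume "b < c"
          moreover have "j < n" "n-1 < n" using j n2 by auto
          ultimately have "ext v j < ext v (n-1)" using cpD[OF h _ _ j(2) lastc] by blast
          then show "\<tau> j < v" using j by (simp add: ext_def) }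
        { assume "c < b"
          moreover have "j < n" "n-1 < n" using j n2 by auto
          ultimately have "ext v (n-1) < ext v j" using cpD[OF h _ _ lastc j(2)] by blast
          then show "v < \<tau> j" using j by (simp add: ext_def) }
      qed
    next
      assume h: "\<forall>j<n-1. \<forall>b. u!(p+1+j) = Some b \<longrightarrow> (b < c \<longrightarrow> \<tau> j < v) \<and> (c < b \<longrightarrow> v < \<tau> j)"
      show "cp u n (p+1) (ext v)" unfolding cp_def
      proof (intro allI impI)
        fix j k a b assume jk: "j < n" "k < n" "u!(p+1+j) = Some a" "u!(p+1+k) = Some b" "a < b"
        show "ext v j < ext v k"
        proof (cases "j = n-1"; cases "k = n-1")
          assume "j = n-1" "k = n-1" then show ?thesis using jk by simp
        next
          assume a: "j = n-1" "k \<noteq> n-1"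
          then have "a = c" "k < n-1" using jk lastc by auto
          then show ?thesis using h jk a by (auto simp: ext_def)
        next
          assume a: "j \<noteq> n-1" "k = n-1"
          then have "b = c" "j < n-1" using jk lastc by auto
          then show ?thesis using h jk a by (auto simp: ext_def)
        next
          assume a: "j \<noteq> n-1" "k \<noteq> n-1"
          then show ?thesis using \<tau>W jk by (auto simp: ext_def)
        qed
      qed
    qed
  qed
  have cp0: "\<And>v. cp u n 0 (ext v) \<longleftrightarrow>
      (\<forall>j<n-1. \<forall>k<n-1. \<forall>a b. u!j = Some a \<longrightarrow> u!k = Some b \<longrightarrow> a < b \<longrightarrow> \<tau> j < \<tau> k) \<and>
      (\<forall>j<n-1. \<forall>b c0. u!(n-1) = Some c0 \<longrightarrow> u!j = Some b \<longrightarrow> (b < c0 \<longrightarrow> \<tau> j < v) \<and> (c0 < b \<longrightarrow> v < \<tau> j))"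
    (is "\<And>v. _ \<longleftrightarrow> ?R v")
  proof -
    fix v
    show "?thesis v"
    proof
      assume h: "cp u n 0 (ext v)"
      show "?R v"
      proof (intro conjI allI impI)
        fix j k a b assume jk: "j < n-1" "k<n-1" "u!j = Some a" "u!k = Some b" "a < b"
        then have "ext v j < ext v k" using cpD[OF h, of j k a b] by auto
        then show "\<tau> j < \<tau> k" using jk by (simp add: ext_def)
      next
        fix j b c0 assume j: "j < n-1" "u!(n-1) = Some c0" "u!j = Some b" "b < c0"
        then have "ext v j < ext v (n-1)" using cpD[OF h, of j "n-1" b c0] n2 by auto
        then show "\<tau> j < v" using j by (simp add: ext_def)
      next
        fix j b c0 assume j: "j < n-1" "u!(n-1) = Some c0" "u!j = Some b" "c0 < b"
        then have "ext v (n-1) < ext v j" using cpD[OF h, of "n-1" j c0 b] n2 by auto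
        then show "v < \<tau> j" using j by (simp add: ext_def)
      qed
    next
      assume h: "?R v"
      show "cp u n 0 (ext v)" unfolding cp_def
      proof (intro allI impI)
        fix j k a b assume jk: "j < n" "k < n" "u!(0+j) = Some a" "u!(0+k) = Some b" "a < b"
        show "ext v j < ext v k"
        proof (cases "j = n-1"; cases "k = n-1")
          assume "j = n-1" "k = n-1" then show ?thesis using jk by simp
        next
          assume a: "j = n-1" "k \<noteq> n-1"
          then show ?thesis using h jk a by (auto simp: ext_def)
        next
          assume a: "j \<noteq> n-1" "k = n-1"
          then show ?thesis using h jk a by (auto simp: ext_def)
        next
          assume a: "j \<noteq> n-1" "k \<noteq> n-1"
          then show ?thesis using h jk by (auto simp: ext_def)
        qed
      qed
    qed
  qed
  have gP: "g < n-1 \<and> u!(p+1+g) = Some bg \<and> c < bg" using G by auto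
  obtain vt where vt: "\<forall>l\<in>T. l < vt" "vt \<notin> T"
    using gap[OF finT finite.emptyI finT] by auto
  have "\<not> cp u n (p+1) (ext vt)"
  proof
    assume "cp u n (p+1) (ext vt)"
    then have "vt < \<tau> g" using cpP G by blast
    moreover have "\<tau> g \<in> T" using G unfolding T_def by auto
    ultimately show False using vt by fastforce
  qed
  then have "cp u n 0 (ext vt)" using XOR[OF vt(2)] by blast
  then have P0: "\<forall>j<n-1. \<forall>k<n-1. \<forall>a b. u!j = Some a \<longrightarrow> u!k = Some b \<longrightarrow> a < b \<longrightarrow> \<tau> j < \<tau> k"
    and G0e0: "\<forall>j<n-1. \<forall>b c0. u!(n-1) = Some c0 \<longrightarrow> u!j = Some b \<longrightarrow> c0 < b \<longrightarrow> vt < \<tau> j"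
    using cp0 by blast+
  have G0e: "\<And>j b c0. j<n-1 \<Longrightarrow> u!(n-1) = Some c0 \<Longrightarrow> u!j = Some b \<Longrightarrow> \<not> c0 < b"
  proof
    fix j b c0 assume "j<n-1" "u!(n-1) = Some c0" "u!j = Some b" "c0 < b"
    then have "vt < \<tau> j" using G0e0 by blast
    moreover have "\<tau> j \<in> T" using \<open>j<n-1\<close> unfolding T_def by auto
    ultimately show False using vt by fastforce
  qed
  define Lo where "Lo = {\<tau> j | j. j<n-1 \<and> (\<forall>g'<n-1. \<forall>b'. u!(p+1+g') = Some b' \<longrightarrow> c < b' \<longrightarrow> \<tau> j < \<tau> g')}"
  define Up where "Up = {\<tau> g' | g'. g' < n-1 \<and> (\<exists>b'. u!(p+1+g') = Some b' \<and> c < b')}"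
  obtain vm where vm: "\<forall>l\<in>Lo. l < vm" "\<forall>h\<in>Up. vm < h" "vm \<notin> T"
  proof -
    have "\<exists>z. (\<forall>l\<in>Lo. l < z) \<and> (\<forall>h\<in>Up. z < h) \<and> z \<notin> T"
      by (rule gap) (auto simp: Lo_def Up_def finT)
    then show ?thesis using that by blast
  qed
  have "cp u n (p+1) (ext vm)"
    unfolding cpP
  proof (intro allI impI conjI)
    fix j b assume j: "j < n-1" "u!(p+1+j) = Some b"
    { assume "b < c"
      then have "\<tau> j \<in> Lo" unfolding Lo_def using j \<tau>W
        by (smt (verit, best) less_trans mem_Collect_eq)
      then show "\<tau> j < vm" using vm by blast }
    { assume "c < b"
      then have "\<tau> j \<in> Up" unfolding Up_def using j by blast
      then show "vm < \<tau> j" using vm by blast }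
  qed
  then have "\<not> cp u n 0 (ext vm)" using XOR[OF vm(3)] by blast
  then obtain l bl c0 where l: "l < n-1" "u!(n-1) = Some c0" "u!l = Some bl"
      "\<not> ((bl < c0 \<longrightarrow> \<tau> l < vm) \<and> (c0 < bl \<longrightarrow> vm < \<tau> l))"
    using cp0 P0 by blast
  have blc0: "bl < c0" using l G0e by (meson linorder_neqE_nat)
  have "\<tau> l \<in> T" using l unfolding T_def by auto
  have vml: "vm < \<tau> l"
  proof -
    have "\<not> \<tau> l < vm" using l(4) blc0 by auto
    moreover have "\<tau> l \<noteq> vm" using \<open>\<tau> l \<in> T\<close> vm(3) by auto
    ultimately show ?thesis by linarith
  qed
  have "\<tau> l \<notin> Lo" using vml vm(1) by fastforce
  then obtain g' b' where g': "g' < n-1" "u!(p+1+g') = Some b'" "c < b'" "\<tau> g' \<le> \<tau> l"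
    unfolding Lo_def using l(1) by (auto simp: not_less)
  have star: "\<And>l' bl' g'' b''. l' < n-1 \<Longrightarrow> u!l' = Some bl' \<Longrightarrow> g'' < n-1 \<Longrightarrow> u!(p+1+g'') = Some b''
      \<Longrightarrow> c < b'' \<Longrightarrow> \<tau> g'' < \<tau> l' \<Longrightarrow> False"
  proof -
    fix l' bl' g'' b'' assume h: "l' < n-1" "u!l' = Some bl'" "g'' < n-1" "u!(p+1+g'') = Some b''"
      "c < b''" "\<tau> g'' < \<tau> l'"
    have "bl' \<noteq> c0"
    proof
      assume "bl' = c0"
      then show False using dist[of 0 l' "n-1" bl'] h(1,2) l(2) len n2 by auto
    qed
    then have blc: "bl' < c0" using G0e[OF h(1) l(2) h(2)] by auto
    obtain v' where v': "\<forall>x\<in>{\<tau> j | j. j<n-1 \<and> \<tau> j < \<tau> l'}. x < v'" "\<forall>x\<in>{\<tau> l'}. v' < x" "v' \<notin> T"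
    proof -
      have "\<exists>z. (\<forall>x\<in>{\<tau> j | j. j<n-1 \<and> \<tau> j < \<tau> l'}. x < z) \<and> (\<forall>x\<in>{\<tau> l'}. z < x) \<and> z \<notin> T"
        by (rule gap) (auto simp: finT)
      then show ?thesis using that by blast
    qed
    have "\<not> cp u n 0 (ext v')"
    proof
      assume "cp u n 0 (ext v')"
      then have "\<tau> l' < v'" using cp0 h(1,2) l(2) blc by blast
      then show False using v'(2) by auto
    qed
    then have "cp u n (p+1) (ext v')" using XOR[OF v'(3)] by blast
    then have "v' < \<tau> g''" using cpP h(3,4,5) by blast
    moreover have "\<tau> g'' < v'" using v'(1) h(3,6) by blast
    ultimately show False by simp
  qed
  have "\<not> \<tau> g' < \<tau> l" using star[OF l(1) l(3) g'(1,2,3)] by blast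
  then have "\<tau> g' = \<tau> l" using g'(4) by simp
  then have gl: "g' = l" using \<tau>inj g'(1) l(1) by (auto simp: inj_on_def)
  have noL: "\<And>a b. a < n-1 \<Longrightarrow> u!(p+1+a) = Some b \<Longrightarrow> b < c \<Longrightarrow> False"
  proof -
    fix a b assume a: "a < n-1" "u!(p+1+a) = Some b" "b < c"
    obtain vb where vb: "\<forall>x\<in>T. vb < x" "vb \<notin> T"
      using gap[OF finite.emptyI finT finT] by auto
    have "\<not> cp u n (p+1) (ext vb)"
    proof
      assume "cp u n (p+1) (ext vb)"
      then have "\<tau> a < vb" using cpP a by blast
      moreover have "\<tau> a \<in> T" using a unfolding T_def by auto
      ultimately show False using vb by fastforce
    qed
    moreover have "\<not> cp u n 0 (ext vb)"
    proof
      assume "cp u n 0 (ext vb)"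
      then have "\<tau> l < vb" using cp0 l(1,2,3) blc0 by blast
      then show False using vb \<open>\<tau> l \<in> T\<close> by fastforce
    qed
    ultimately show False using XOR[OF vb(2)] by blast
  qed
  have eql: "\<And>a. a < n-1 \<Longrightarrow> u!a \<noteq> None \<Longrightarrow> a = l"
  proof (rule ccontr)
    fix a assume a: "a < n-1" "u!a \<noteq> None" "a \<noteq> l"
    then obtain ba where ba: "u!a = Some ba" by auto
    have \<tau>l: "\<tau> l = real b'" using \<tau>val g'(2) gl by simp
    have "b' \<le> M" using Mge[OF _ g'(2)] win g'(1) by auto
    show False
    proof (cases "u!(p+1+a)")
      case None
      then have "\<tau> a = real M + 1 + real a" by (simp add: \<tau>_def)
      then have "\<tau> l < \<tau> a" using \<tau>l \<open>b' \<le> M\<close> by simp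
      then show False using star[OF a(1) ba l(1)] g'(2,3) gl by blast
    next
      case (Some b)
      have "b \<noteq> c"
      proof
        assume "b = c"
        then show False using dist[OF win, of a "n-1" b] Some lastc a(1) n2 by auto
      qed
      moreover have "\<not> b < c" using noL a(1) Some by blast
      ultimately have cb: "c < b" by simp
      have "\<tau> a \<noteq> \<tau> l" using \<tau>inj a(1,3) l(1) by (auto simp: inj_on_def)
      then consider "\<tau> a < \<tau> l" | "\<tau> l < \<tau> a" by linarith
      then show False
      proof cases
        case 1 then show False using star[OF l(1) l(3) a(1) Some cb] by blast
      next
        case 2 then show False using star[OF a(1) ba l(1)] g'(2,3) gl by blast
      qed
    qed
  qed
  show ?thesis using eql by metis
qed

end




lemma UW_compl:
  assumes "UW n u" and K: "\<And>t a. t < length u \<Longrightarrow> u!t = Some a \<Longrightarrow> a < K"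
  shows "UW n (map (map_option (\<lambda>a. K - a)) u)"
proof -
  interpret UW n u by fact
  let ?u = "map (map_option (\<lambda>a. K - a)) u"
  have nth: "\<And>t. t < length u \<Longrightarrow> ?u!t = map_option (\<lambda>a. K - a) (u!t)" by simp
  have cpc: "\<And>i y. i + n \<le> length u \<Longrightarrow> cp ?u n i y \<longleftrightarrow> cp u n i (\<lambda>j. - y j)"
  proof -
    fix i y assume i: "i + n \<le> length u"
    show "cp ?u n i y \<longleftrightarrow> cp u n i (\<lambda>j. - y j)"
    proof
      assume h: "cp ?u n i y"
      show "cp u n i (\<lambda>j. - y j)" unfolding cp_def
      proof (intro allI impI)
        fix j k a b assume jk: "j < n" "k < n" "u!(i+j) = Some a" "u!(i+k) = Some b" "a < b"
        have "a < K" "b < K" using K[of "i+j" a] K[of "i+k" b] jk i by auto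
        then have "K - b < K - a" using jk by auto
        moreover have "?u!(i+k) = Some (K - b)" "?u!(i+j) = Some (K - a)" using nth jk i by auto
        ultimately have "y k < y j" using cpD[OF h jk(2,1)] by blast
        then show "- y j < - y k" by simp
      qed
    next
      assume h: "cp u n i (\<lambda>j. - y j)"
      show "cp ?u n i y" unfolding cp_def
      proof (intro allI impI)
        fix j k a b assume jk: "j < n" "k < n" "?u!(i+j) = Some a" "?u!(i+k) = Some b" "a < b"
        have e1: "map_option (\<lambda>a. K - a) (u!(i+j)) = Some a" using jk(3) nth[of "i+j"] jk(1) i by simp
        then obtain a' where a': "u!(i+j) = Some a'" "a = K - a'" by blast
        have e2: "map_option (\<lambda>a. K - a) (u!(i+k)) = Some b" using jk(4) nth[of "i+k"] jk(2) i by simp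
        then obtain b' where b': "u!(i+k) = Some b'" "b = K - b'" by blast
        have "a' < K" "b' < K" using K[of "i+j" a'] K[of "i+k" b'] a' b' jk i by auto
        then have "b' < a'" using a' b' jk by auto
        then have "- y k < - y j" using cpD[OF h jk(2,1) b'(1) a'(1)] by blast
        then show "y j < y k" by simp
      qed
    qed
  qed
  have injn: "\<And>y::nat\<Rightarrow>real. inj_on y {..<n} \<Longrightarrow> inj_on (\<lambda>j. - y j) {..<n}" by (auto simp: inj_on_def)
  show ?thesis
  proof
    show "n \<le> length ?u" using len by simp
  next
    fix i j k a assume h: "i + n \<le> length ?u" "j < n" "k < n" "j \<noteq> k" "?u!(i+j) = Some a"
    show "?u!(i+k) \<noteq> Some a"
    proof
      assume h2: "?u!(i+k) = Some a"
      have e1: "map_option (\<lambda>a. K - a) (u!(i+j)) = Some a" using h nth[of "i+j"] by simp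
      then obtain a' where a': "u!(i+j) = Some a'" "a = K - a'" by blast
      have e2: "map_option (\<lambda>a. K - a) (u!(i+k)) = Some a" using h h2 nth[of "i+k"] by simp
      then obtain b' where b': "u!(i+k) = Some b'" "a = K - b'" by blast
      have "a' < K" "b' < K" using K[of "i+j" a'] K[of "i+k" b'] a' b' h by auto
      then have "a' = b'" using a' b' by auto
      then show False using dist[of i j k a'] h a' b' by auto
    qed
  next
    fix y :: "nat \<Rightarrow> real" assume y: "inj_on y {..<n}"
    obtain i where "i + n \<le> length u" "cp u n i (\<lambda>j. - y j)" using U1[OF injn[OF y]] by blast
    then show "\<exists>i. i + n \<le> length ?u \<and> cp ?u n i y" using cpc by auto
  next
    fix y :: "nat \<Rightarrow> real" and i i' assume h: "inj_on y {..<n}" "i + n \<le> length ?u" "i' + n \<le> length ?u"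
      "cp ?u n i y" "cp ?u n i' y"
    then show "i = i'" using U2[OF injn[OF h(1)], of i i'] cpc by auto
  qed
qed

lemma UW_rev:
  assumes "UW n u"
  shows "UW n (rev u)"
proof -
  interpret UW n u by fact
  let ?N = "length u"
  have nth: "\<And>i j. i + n \<le> ?N \<Longrightarrow> j < n \<Longrightarrow> rev u ! (i+j) = u ! ((?N-n-i) + (n-1-j))"
    by (simp add: rev_nth)
  have cpr: "\<And>i y. i + n \<le> ?N \<Longrightarrow> cp (rev u) n i y \<longleftrightarrow> cp u n (?N-n-i) (\<lambda>j. y (n-1-j))"
  proof -
    fix i y assume i: "i + n \<le> ?N"
    show "cp (rev u) n i y \<longleftrightarrow> cp u n (?N-n-i) (\<lambda>j. y (n-1-j))"
    proof
      assume h: "cp (rev u) n i y"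
      show "cp u n (?N-n-i) (\<lambda>j. y (n-1-j))" unfolding cp_def
      proof (intro allI impI)
        fix j k a b assume jk: "j < n" "k < n" "u!(?N-n-i+j) = Some a" "u!(?N-n-i+k) = Some b" "a < b"
        have "rev u ! (i + (n-1-j)) = Some a" "rev u ! (i + (n-1-k)) = Some b"
          using nth[OF i, of "n-1-j"] nth[OF i, of "n-1-k"] jk by auto
        then show "y (n-1-j) < y (n-1-k)" using cpD[OF h _ _ _ _ jk(5)] jk by auto
      qed
    next
      assume h: "cp u n (?N-n-i) (\<lambda>j. y (n-1-j))"
      show "cp (rev u) n i y" unfolding cp_def
      proof (intro allI impI)
        fix j k a b assume jk: "j < n" "k < n" "rev u!(i+j) = Some a" "rev u!(i+k) = Some b" "a < b"
        have ab: "u!(?N-n-i+(n-1-j)) = Some a" "u!(?N-n-i+(n-1-k)) = Some b"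
          using nth[OF i, of j] nth[OF i, of k] jk by auto
        have jj: "n-1-j < n" "n-1-k < n" using jk by auto
        have "y (n-1-(n-1-j)) < y (n-1-(n-1-k))" using cpD[OF h jj ab jk(5)] by simp
        then show "y j < y k" using jk by auto
      qed
    qed
  qed
  have injr: "\<And>y::nat\<Rightarrow>real. inj_on y {..<n} \<Longrightarrow> inj_on (\<lambda>j. y (n-1-j)) {..<n}"
  proof -
    fix y :: "nat \<Rightarrow> real" assume y: "inj_on y {..<n}"
    show "inj_on (\<lambda>j. y (n-1-j)) {..<n}"
    proof (rule inj_onI)
      fix a b assume ab: "a \<in> {..<n}" "b \<in> {..<n}" "y (n-1-a) = y (n-1-b)"
      then have "n-1-a = n-1-b" using inj_onD[OF y ab(3)] by auto
      then show "a = b" using ab by auto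
    qed
  qed
  show ?thesis
  proof
    show "n \<le> length (rev u)" using len by simp
  next
    fix i j k a assume h: "i + n \<le> length (rev u)" "j < n" "k < n" "j \<noteq> k" "rev u!(i+j) = Some a"
    show "rev u!(i+k) \<noteq> Some a"
      using dist[of "?N-n-i" "n-1-j" "n-1-k" a] h nth[of i j] nth[of i k] by auto
  next
    fix y :: "nat \<Rightarrow> real" assume y: "inj_on y {..<n}"
    obtain i where i: "i + n \<le> ?N" "cp u n i (\<lambda>j. y (n-1-j))" using U1[OF injr[OF y]] by blast
    have "?N - n - (?N - n - i) = i" using i len by auto
    then have "cp (rev u) n (?N - n - i) y" using cpr[of "?N-n-i" y] i by auto
    then show "\<exists>i. i + n \<le> length (rev u) \<and> cp (rev u) n i y" using len by (intro exI[of _ "?N-n-i"]) auto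
  next
    fix y :: "nat \<Rightarrow> real" and i i' assume h: "inj_on y {..<n}" "i + n \<le> length (rev u)" "i' + n \<le> length (rev u)"
      "cp (rev u) n i y" "cp (rev u) n i' y"
    have "?N-n-i = ?N-n-i'" using U2[OF injr[OF h(1)], of "?N-n-i" "?N-n-i'"] cpr h by auto
    then show "i = i'" using h by auto
  qed
qed

lemma count_ge:
  assumes Q: "\<forall>a b. a < n-1 \<longrightarrow> b < n-1 \<longrightarrow> u!a \<noteq> None \<longrightarrow> u!b \<noteq> None \<longrightarrow> a = b"
    and nl: "n \<le> length u"
  shows "n \<le> count_list u None + 2"
proof -
  define A where "A = {j. j < n-1 \<and> u!j = None}"
  define B where "B = {j. j < n-1 \<and> u!j \<noteq> None}"
  have finB: "finite B" unfolding B_def by simp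
  have "\<forall>a1\<in>B. \<forall>a2\<in>B. a1 = a2" using Q unfolding B_def by blast
  then have cB: "card B \<le> Suc 0" using card_le_Suc0_iff_eq[OF finB] by blast
  have un: "A \<union> B = {..<n-1}" unfolding A_def B_def by auto
  have "card (A \<union> B) = card A + card B" by (rule card_Un_disjoint) (auto simp: A_def B_def)
  then have cAB: "card A + card B = n - 1" using un by simp
  have "count_list u None = card {i. i < length u \<and> None = u!i}"
    by (simp add: count_list_eq_length_filter length_filter_conv_card)
  moreover have "A \<subseteq> {i. i < length u \<and> None = u!i}" using nl unfolding A_def by auto
  moreover have "finite {i. i < length u \<and> None = u!i}" by simp
  ultimately have "card A \<le> count_list u None" using card_mono by metis
  then show ?thesis using cB cAB by linarith
qed

context UW begin

lemma FR:
  assumes p: "u!p = None" "p + n < length u" and n2: "2 \<le> n" and c: "u!(p+n) = Some c"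
  shows "n \<le> count_list u None + 2"
proof -
  have win: "p + 1 + n \<le> length u" using p by auto
  have lastc: "u!(p+1+(n-1)) = Some c" using c n2 by (simp add: add.commute add.left_commute)
  have Q: "\<forall>a b. a < n-1 \<longrightarrow> b < n-1 \<longrightarrow> u!a \<noteq> None \<longrightarrow> u!b \<noteq> None \<longrightarrow> a = b"
  proof (cases "\<exists>g bg. g < n-1 \<and> u!(p+1+g) = Some bg \<and> c < bg")
    case True
    then obtain g bg where "g < n-1" "u!(p+1+g) = Some bg" "c < bg" by blast
    then show ?thesis using FR_main[OF p n2 c] by blast
  next
    case F1: False
    show ?thesis
    proof (cases "\<exists>g bg. g < n-1 \<and> u!(p+1+g) = Some bg \<and> bg < c")
      case True
      then obtain g bg where g: "g < n-1" "u!(p+1+g) = Some bg" "bg < c" by blast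
      define K where "K = Suc (Max (insert 0 {a. Some a \<in> set u}))"
      have finS: "finite {a. Some a \<in> set u}"
        by (rule finite_subset[of _ "the ` set u"]) force+
      have K: "\<And>t a. t < length u \<Longrightarrow> u!t = Some a \<Longrightarrow> a < K"
      proof -
        fix t a assume "t < length u" "u!t = Some a"
        then have "Some a \<in> set u" by (metis nth_mem)
        then have "a \<le> Max (insert 0 {a. Some a \<in> set u})" using finS by (intro Max_ge) auto
        then show "a < K" by (simp add: K_def)
      qed
      let ?u = "map (map_option (\<lambda>a. K - a)) u"
      interpret C: UW n ?u by (rule UW_compl[OF UW_axioms K])
      have "c < K" "bg < K" using K[of "p+n" c] K[of "p+1+g" bg] c g p win by auto
      then have "K - c < K - bg" using g by auto
      moreover have "?u!p = None" "p + n < length ?u" "?u!(p+n) = Some (K - c)" "?u!(p+1+g) = Some (K - bg)"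
        using p c g win by auto
      ultimately have "\<forall>a b. a < n-1 \<longrightarrow> b < n-1 \<longrightarrow> ?u!a \<noteq> None \<longrightarrow> ?u!b \<noteq> None \<longrightarrow> a = b"
        using C.FR_main[of p "K - c" g "K - bg"] n2 g(1) by blast
      moreover have "\<And>a. a < n - 1 \<Longrightarrow> ?u!a \<noteq> None \<longleftrightarrow> u!a \<noteq> None" using len by auto
      ultimately show ?thesis by blast
    next
      case F2: False
      have allN: "\<And>j. j < n-1 \<Longrightarrow> u!(p+1+j) = None"
      proof (rule ccontr)
        fix j assume j: "j < n-1" "u!(p+1+j) \<noteq> None"
        then obtain b where b: "u!(p+1+j) = Some b" by auto
        have "b \<noteq> c" using dist[OF win, of j "n-1" b] b lastc j n2 by auto
        then show False using F1 F2 j b by (meson linorder_neqE_nat)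
      qed
      define y where "y = (\<lambda>j::nat. real j)"
      have injy: "inj_on y {..<n}" by (auto simp: y_def inj_on_def)
      have "cp u n p y" unfolding cp_def
      proof (intro allI impI)
        fix j k a b assume jk: "j < n" "k < n" "u!(p+j) = Some a" "u!(p+k) = Some b" "a < b"
        have "j \<noteq> 0" using p(1) jk(3) by (cases j) auto
        have "p+1+(j-1) = p+j" using \<open>j \<noteq> 0\<close> by simp
        moreover have "u!(p+1+(j-1)) = None" using allN[of "j-1"] jk(1) \<open>j \<noteq> 0\<close> by simp
        ultimately show "y j < y k" using jk(3) by simp
      qed
      moreover have "cp u n (p+1) y" unfolding cp_def
      proof (intro allI impI)
        fix j k a b assume jk: "j < n" "k < n" "u!(p+1+j) = Some a" "u!(p+1+k) = Some b" "a < b"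
        have "j = n-1"
        proof (rule ccontr)
          assume "j \<noteq> n-1" then have "j < n-1" using jk by auto
          then show False using allN jk(3) by simp
        qed
        moreover have "k = n-1"
        proof (rule ccontr)
          assume "k \<noteq> n-1" then have "k < n-1" using jk by auto
          then show False using allN jk(4) by simp
        qed
        ultimately show "y j < y k" using jk by simp
      qed
      ultimately have "p = p + 1" using U2[OF injy] p by auto
      then show ?thesis by simp
    qed
  qed
  show ?thesis by (rule count_ge[OF Q len])
qed

lemma BR:
  assumes p: "u!p = None" "p < length u" "n \<le> p" and n2: "2 \<le> n" and c: "u!(p-n) = Some c"
  shows "n \<le> count_list u None + 2"
proof -
  interpret R: UW n "rev u" by (rule UW_rev[OF UW_axioms])
  let ?q = "length u - 1 - p"
  have "rev u ! ?q = None" using p by (simp add: rev_nth)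
  moreover have "?q + n < length (rev u)" using p by auto
  moreover have "rev u ! (?q + n) = Some c" using p c by (simp add: rev_nth Suc_diff_Suc)
  ultimately have "n \<le> count_list (rev u) None + 2" using R.FR n2 by blast
  then show ?thesis by simp
qed

end



lemma factor_nth: "i + n \<le> length u \<Longrightarrow> j < n \<Longrightarrow> factor u n i ! j = u!(i+j)"
  by (simp add: factor_def)

lemma factor_len: "i + n \<le> length u \<Longrightarrow> length (factor u n i) = n"
  by (simp add: factor_def)

lemma rank:
  fixes y :: "nat \<Rightarrow> real"
  assumes y: "inj_on y {..<n}"
  defines "\<pi> \<equiv> map (\<lambda>j. card {l. l<n \<and> y l \<le> y j}) [0..<n]"
  shows "is_perm n \<pi>" and "\<And>j k. j<n \<Longrightarrow> k<n \<Longrightarrow> \<pi>!j < \<pi>!k \<longleftrightarrow> y j < y k"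
proof -
  define S where "S j = {l. l<n \<and> y l \<le> y j}" for j
  have pij: "\<And>j. j < n \<Longrightarrow> \<pi>!j = card (S j)" by (simp add: \<pi>_def S_def)
  have finS: "\<And>j. finite (S j)" by (simp add: S_def)
  have lt: "\<And>j k. j<n \<Longrightarrow> k<n \<Longrightarrow> y j < y k \<Longrightarrow> card (S j) < card (S k)"
  proof -
    fix j k assume jk: "j<n" "k<n" "y j < y k"
    have "S j \<subseteq> S k" using jk(3) by (auto simp: S_def)
    moreover have "k \<in> S k" "k \<notin> S j" using jk by (auto simp: S_def)
    ultimately have "S j \<subset> S k" by blast
    then show "card (S j) < card (S k)" using finS by (simp add: psubset_card_mono)
  qed
  have le: "\<And>j k. j<n \<Longrightarrow> k<n \<Longrightarrow> y j \<le> y k \<Longrightarrow> card (S j) \<le> card (S k)"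
  proof -
    fix j k assume jk: "j<n" "k<n" "y j \<le> y k"
    have "S j \<subseteq> S k" using jk by (auto simp: S_def)
    then show "card (S j) \<le> card (S k)" using finS by (simp add: card_mono)
  qed
  show ord: "\<And>j k. j<n \<Longrightarrow> k<n \<Longrightarrow> \<pi>!j < \<pi>!k \<longleftrightarrow> y j < y k"
  proof -
    fix j k assume jk: "j<n" "k<n"
    show "\<pi>!j < \<pi>!k \<longleftrightarrow> y j < y k"
    proof
      assume "\<pi>!j < \<pi>!k"
      then have "\<not> y k \<le> y j" using le[OF jk(2,1)] pij jk by fastforce
      then show "y j < y k" by simp
    next
      assume "y j < y k" then show "\<pi>!j < \<pi>!k" using lt[OF jk] pij jk by simp
    qed
  qed
  have len: "length \<pi> = n" by (simp add: \<pi>_def)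
  have dist: "distinct \<pi>"
  proof (rule distinct_conv_nth[THEN iffD2], intro allI impI)
    fix j k assume jk: "j < length \<pi>" "k < length \<pi>" "j \<noteq> k"
    then have "y j \<noteq> y k" using y len by (auto simp: inj_on_def)
    then have "y j < y k \<or> y k < y j" by linarith
    then show "\<pi>!j \<noteq> \<pi>!k"
    proof
      assume "y j < y k" then have "\<pi>!j < \<pi>!k" using ord jk len by simp
      then show ?thesis by simp
    next
      assume "y k < y j" then have "\<pi>!k < \<pi>!j" using ord jk len by simp
      then show ?thesis by simp
    qed
  qed
  have sub: "set \<pi> \<subseteq> {1..n}"
  proof
    fix v assume "v \<in> set \<pi>"
    then obtain j where j: "j < n" "v = \<pi>!j" using len by (metis in_set_conv_nth)
    have "j \<in> S j" using j by (simp add: S_def)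
    then have "0 < card (S j)" using finS[of j] by (auto simp: card_gt_0_iff)
    moreover have "S j \<subseteq> {..<n}" by (auto simp: S_def)
    then have "card (S j) \<le> n" using card_mono[OF finite_lessThan, of "S j" n] by simp
    ultimately show "v \<in> {1..n}" using j pij by simp
  qed
  have cn: "card (set \<pi>) = card {1..n}" using dist len by (simp add: distinct_card)
  have "set \<pi> = {1..n}" by (rule card_subset_eq[OF finite_atLeastAtMost sub cn])
  then show "is_perm n \<pi>" using len dist by (simp add: is_perm_def)
qed

lemma L1:
  assumes "covers w \<pi>" "length w = n" "j<n" "k<n" "w!j = Some a" "w!k = Some b" "a<b"
  shows "\<pi>!j < \<pi>!k"
proof -
  obtain x :: "nat \<Rightarrow> real" where x: "\<forall>i<length w. \<forall>k. w ! i = Some k \<longrightarrow> x i = real k"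
    "\<forall>i<length w. \<forall>j<length w. x i < x j \<longleftrightarrow> \<pi> ! i < \<pi> ! j"
    using assms(1) unfolding covers_def by blast
  have "x j = real a" "x k = real b" using x(1) assms by auto
  then have "x j < x k" using assms(7) by simp
  then show ?thesis using x(2) assms by auto
qed

lemma L2:
  assumes perm: "is_perm n \<pi>" and lw: "length w = n" and di: "distinct_ints w"
    and pos: "\<And>j a. j<n \<Longrightarrow> w!j = Some a \<Longrightarrow> 0 < a"
    and cmp: "\<And>j k a b. j<n \<Longrightarrow> k<n \<Longrightarrow> w!j = Some a \<Longrightarrow> w!k = Some b \<Longrightarrow> a<b \<Longrightarrow> \<pi>!j < \<pi>!k"
  shows "covers w \<pi>"
proof -
  have lp: "length \<pi> = n" and dp: "distinct \<pi>" and sp: "set \<pi> = {1..n}" using perm by (auto simp: is_perm_def)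
  define e :: real where "e = real n + 1"
  define r where "r j = real (\<pi>!j)" for j
  have rb: "\<And>j. j < n \<Longrightarrow> 1 \<le> r j \<and> r j \<le> real n"
  proof -
    fix j assume "j < n"
    then have "\<pi>!j \<in> {1..n}" using nth_mem[of j \<pi>] sp lp by auto
    then show "1 \<le> r j \<and> r j \<le> real n" by (auto simp: r_def)
  qed
  have epos: "e > 0" by (simp add: e_def)
  define T where "T j = {real a + (r j - r l)/e | l a. l<n \<and> w!l = Some a \<and> \<pi>!l \<le> \<pi>!j}" for j
  define S where "S j = insert (r j / e - 1) (T j)" for j
  define x where "x j = Max (S j)" for j
  have finT: "\<And>j. finite (T j)"
  proof -
    fix j
    have "T j \<subseteq> (\<lambda>l. real (the (w!l)) + (r j - r l)/e) ` {..<n}"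
    proof
      fix s assume "s \<in> T j"
      then obtain l a where la: "l < n" "w!l = Some a" "s = real a + (r j - r l)/e" by (auto simp: T_def)
      then show "s \<in> (\<lambda>l. real (the (w!l)) + (r j - r l)/e) ` {..<n}" by (intro image_eqI[of _ _ l]) auto
    qed
    then show "finite (T j)" by (rule finite_subset) auto
  qed
  have finS: "\<And>j. finite (S j)" using finT by (simp add: S_def)
  have xin: "\<And>j. x j \<in> S j" unfolding x_def using finS by (intro Max_in) (auto simp: S_def)
  have xa: "\<And>j a. j < n \<Longrightarrow> w!j = Some a \<Longrightarrow> x j = real a"
  proof -
    fix j a assume j: "j < n" "w!j = Some a"
    have inS: "real a \<in> S j" unfolding S_def T_def using j by force
    have "\<forall>s\<in>S j. s \<le> real a"
    proof
      fix s assume "s \<in> S j"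
      then consider "s = r j / e - 1" | l a' where "l<n" "w!l = Some a'" "\<pi>!l \<le> \<pi>!j" "s = real a' + (r j - r l)/e"
        unfolding S_def T_def by blast
      then show "s \<le> real a"
      proof cases
        case 1
        have "r j / e < 1" using rb[OF j(1)] epos by (simp add: e_def)
        moreover have "0 < a" using pos j by blast
        ultimately show ?thesis using 1 by linarith
      next
        case (2 l a')
        show ?thesis
        proof (cases "l = j")
          case True then show ?thesis using 2 j by simp
        next
          case False
          then have "\<pi>!l \<noteq> \<pi>!j" using dp lp 2 j by (simp add: nth_eq_iff_index_eq)
          then have plj: "\<pi>!l < \<pi>!j" using 2 by simp
          have "\<not> a < a'" using cmp[OF j(1) 2(1) j(2) 2(2)] plj by auto
          moreover have "a' \<noteq> a" using di 2 j False lw unfolding distinct_ints_def by force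
          ultimately have "a' + 1 \<le> a" by simp
          moreover have "(r j - r l)/e < 1" using rb[OF j(1)] rb[OF 2(1)] epos by (simp add: e_def)
          ultimately show ?thesis using 2 by linarith
        qed
      qed
    qed
    then show "x j = real a" unfolding x_def using inS finS by (intro Max_eqI) auto
  qed
  have xlt: "\<And>j k. j<n \<Longrightarrow> k<n \<Longrightarrow> \<pi>!j < \<pi>!k \<Longrightarrow> x j < x k"
  proof -
    fix j k assume jk: "j<n" "k<n" "\<pi>!j < \<pi>!k"
    have rjk: "r j < r k" using jk by (simp add: r_def)
    have "\<exists>s'\<in>S k. x j < s'"
    proof -
      from xin[of j] consider "x j = r j / e - 1" | l a where "l<n" "w!l = Some a" "\<pi>!l \<le> \<pi>!j" "x j = real a + (r j - r l)/e"
        unfolding S_def T_def by blast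
      then show ?thesis
      proof cases
        case 1
        have "r k / e - 1 \<in> S k" by (simp add: S_def)
        moreover have "r j / e < r k / e" using rjk epos by (simp add: divide_strict_right_mono)
        ultimately show ?thesis using 1 by force
      next
        case (2 l a)
        have "real a + (r k - r l)/e \<in> S k" unfolding S_def T_def using 2 jk by force
        moreover have "(r j - r l)/e < (r k - r l)/e" using rjk epos by (simp add: divide_strict_right_mono)
        ultimately show ?thesis using 2 by force
      qed
    qed
    then obtain s' where "s' \<in> S k" "x j < s'" by blast
    moreover have "s' \<le> x k" using \<open>s' \<in> S k\<close> finS by (simp add: x_def)
    ultimately show "x j < x k" by simp
  qed
  have xord: "\<And>j k. j<n \<Longrightarrow> k<n \<Longrightarrow> x j < x k \<longleftrightarrow> \<pi>!j < \<pi>!k"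
  proof -
    fix j k assume jk: "j<n" "k<n"
    show "x j < x k \<longleftrightarrow> \<pi>!j < \<pi>!k"
    proof
      assume h: "x j < x k"
      show "\<pi>!j < \<pi>!k"
      proof (rule ccontr)
        assume "\<not> \<pi>!j < \<pi>!k"
        then consider "\<pi>!j = \<pi>!k" | "\<pi>!k < \<pi>!j" by linarith
        then show False
        proof cases
          case 1 then have "j = k" using dp lp jk by (simp add: nth_eq_iff_index_eq)
          then show False using h by simp
        next
          case 2 then show False using xlt[OF jk(2,1)] h by simp
        qed
      qed
    qed (rule xlt[OF jk])
  qed
  have xinj: "inj_on x {..<length w}"
  proof (rule inj_onI)
    fix j k assume jk: "j \<in> {..<length w}" "k \<in> {..<length w}" "x j = x k"
    have jn: "j < n" "k < n" using jk lw by auto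
    have "\<not> \<pi>!j < \<pi>!k" using xord[OF jn] jk(3) by simp
    moreover have "\<not> \<pi>!k < \<pi>!j" using xord[OF jn(2,1)] jk(3) by simp
    ultimately have "\<pi>!j = \<pi>!k" by simp
    then show "j = k" using dp lp jk lw by (simp add: nth_eq_iff_index_eq)
  qed
  show ?thesis unfolding covers_def
    using lw lp xa xinj xord by (intro conjI exI[of _ x]) auto
qed

lemma upw_UW:
  assumes "up_word n u"
  shows "UW n u"
proof -
  note U = assms[unfolded up_word_def]
  have card1: "\<And>\<pi>. is_perm n \<pi> \<Longrightarrow> card {i. i + n \<le> length u \<and> covers (factor u n i) \<pi>} = 1"
    using U by blast
  show ?thesis
  proof
    show "n \<le> length u" using U by blast
  next
    fix i j k a assume h: "i + n \<le> length u" "j < n" "k < n" "j \<noteq> k" "u!(i+j) = Some a"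
    have "distinct_ints (factor u n i)" using U h(1) by blast
    then have "factor u n i ! j \<noteq> None \<longrightarrow> factor u n i ! j \<noteq> factor u n i ! k"
      using h factor_len[OF h(1)] unfolding distinct_ints_def by auto
    then show "u!(i+k) \<noteq> Some a" using h factor_nth[OF h(1)] by auto
  next
    fix y :: "nat \<Rightarrow> real" assume y: "inj_on y {..<n}"
    define \<pi> where "\<pi> = map (\<lambda>j. card {l. l<n \<and> y l \<le> y j}) [0..<n]"
    have pp: "is_perm n \<pi>" and po: "\<And>j k. j<n \<Longrightarrow> k<n \<Longrightarrow> \<pi>!j < \<pi>!k \<longleftrightarrow> y j < y k"
      using rank[OF y] unfolding \<pi>_def by auto
    have "card {i. i + n \<le> length u \<and> covers (factor u n i) \<pi>} = 1" using card1[OF pp] .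
    then obtain i0 where "{i. i + n \<le> length u \<and> covers (factor u n i) \<pi>} = {i0}"
      by (rule card_1_singletonE)
    then have "i0 \<in> {i. i + n \<le> length u \<and> covers (factor u n i) \<pi>}" by simp
    then obtain i where i: "i + n \<le> length u" "covers (factor u n i) \<pi>" by blast
    have "cp u n i y" unfolding cp_def
    proof (intro allI impI)
      fix j k a b assume jk: "j < n" "k < n" "u!(i+j) = Some a" "u!(i+k) = Some b" "a < b"
      have "\<pi>!j < \<pi>!k" using L1[OF i(2) factor_len[OF i(1)] jk(1,2)] jk factor_nth[OF i(1)] by auto
      then show "y j < y k" using po jk by auto
    qed
    then show "\<exists>i. i + n \<le> length u \<and> cp u n i y" using i by blast
  next
    fix y :: "nat \<Rightarrow> real" and i i' assume h: "inj_on y {..<n}" "i + n \<le> length u" "i' + n \<le> length u"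
      "cp u n i y" "cp u n i' y"
    define \<pi> where "\<pi> = map (\<lambda>j. card {l. l<n \<and> y l \<le> y j}) [0..<n]"
    have pp: "is_perm n \<pi>" and po: "\<And>j k. j<n \<Longrightarrow> k<n \<Longrightarrow> \<pi>!j < \<pi>!k \<longleftrightarrow> y j < y k"
      using rank[OF h(1)] unfolding \<pi>_def by auto
    have cov: "covers (factor u n t) \<pi>" if t: "t + n \<le> length u" "cp u n t y" for t
    proof (rule L2[OF pp factor_len[OF t(1)]])
      show "distinct_ints (factor u n t)" using U t(1) by blast
    next
      fix j a assume "j < n" "factor u n t ! j = Some a"
      moreover have "t + j < length u" using \<open>j < n\<close> t(1) by simp
      ultimately have "Some a \<in> set u" using factor_nth[OF t(1) \<open>j < n\<close>] nth_mem[of "t+j" u] by simp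
      then show "0 < a" using U by blast
    next
      fix j k a b assume jk: "j<n" "k<n" "factor u n t ! j = Some a" "factor u n t ! k = Some b" "a<b"
      then have "y j < y k" using cpD[OF t(2) jk(1,2)] factor_nth[OF t(1)] by auto
      then show "\<pi>!j < \<pi>!k" using po jk by auto
    qed
    have "i \<in> {i. i + n \<le> length u \<and> covers (factor u n i) \<pi>}" "i' \<in> {i. i + n \<le> length u \<and> covers (factor u n i) \<pi>}"
      using cov h by auto
    moreover obtain i0 where "{i. i + n \<le> length u \<and> covers (factor u n i) \<pi>} = {i0}"
      using card1[OF pp] by (rule card_1_singletonE)
    ultimately show "i = i'" by simp
  qed
qed




lemma sum_split_add: "(\<Sum>j<a+c. g j) = (\<Sum>j<a. g j) + (\<Sum>t<c. g (a+t :: nat)) "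
  for g :: "nat \<Rightarrow> nat"
  by (induct c) (simp_all add: add_Suc_right)

lemma card_as_sum: "card {t. t<n \<and> P t} = (\<Sum>t<n. if P t then 1 else 0 :: nat)" for n :: nat
proof -
  have "{t. t<n \<and> P t} = {t\<in>{..<n}. P t}" by auto
  moreover have "card {t\<in>{..<n}. P t} = sum (\<lambda>x. 1::nat) {t\<in>{..<n}. P t}" by (rule card_eq_sum)
  moreover have "sum (\<lambda>x. 1::nat) {t\<in>{..<n}. P t} = (\<Sum>t<n. if P t then 1 else 0)"
    by (rule sum.inter_filter) simp
  ultimately show ?thesis by simp
qed

lemma fact_sq: "(n::nat)^n \<le> fact n * fact n"
proof -
  have f: "fact n = (\<Prod>{1..n} :: nat)" by (simp add: fact_prod)
  have r: "(\<Prod>{1..n} :: nat) = (\<Prod>i\<in>{1..n}. n + 1 - i)"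
    using prod.atLeastAtMost_rev[of "\<lambda>i. i" 1 n] by simp
  have "(\<Prod>i\<in>{1..n}. (n::nat)) \<le> (\<Prod>i\<in>{1..n}. i * (n + 1 - i))"
  proof (rule prod_mono)
    fix i assume i: "i \<in> {1..n}"
    have "n + 1 - i = (n - i) + 1" using i by auto
    then have "i * (n + 1 - i) = i * (n - i) + i" by simp
    moreover have "1 * (n - i) \<le> i * (n - i)" using i by (intro mult_le_mono1) auto
    moreover have "n = (n - i) + i" using i by auto
    ultimately have "n \<le> i * (n + 1 - i)" by linarith
    then show "0 \<le> n \<and> n \<le> i * (n + 1 - i)" by simp
  qed
  also have "\<dots> = \<Prod>{1..n} * (\<Prod>i\<in>{1..n}. n + 1 - i)" by (simp add: prod.distrib)
  also have "\<dots> = fact n * fact n" using f r by simp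
  finally show ?thesis by simp
qed

lemma arith_final:
  fixes n k q :: nat
  assumes n2: "2 \<le> n" and k1: "1 \<le> k" and q1: "1 \<le> q" and fa: "fact n \<le> q*n*n^k"
    and big: "3*(q*k) + 2 \<le> n"
  shows False
proof -
  have "q - 1 < 2^(q-1)" by (rule less_exp)
  moreover have "(2::nat)^(q-1) \<le> n^(q-1)" using n2 by (intro power_mono) auto
  ultimately have qn: "q \<le> n^(q-1)" by linarith
  have "q*n*n^k \<le> n^(q-1)*n*n^k" using qn by (intro mult_le_mono1) auto
  also have "\<dots> = n^(q-1+1+k)" by (simp add: power_add)
  also have "q-1+1+k = q + k" using q1 by simp
  also have "n^(q+k) \<le> n^(q*k+1)"
  proof (rule power_increasing)
    obtain q' where q': "q = Suc q'" using q1 by (cases q) auto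
    obtain k' where k': "k = Suc k'" using k1 by (cases k) auto
    show "q + k \<le> q*k + 1" unfolding q' k' by simp
  qed (use n2 in auto)
  finally have f1: "fact n \<le> n^(q*k+1)" using fa by linarith
  have "n^n \<le> fact n * fact n" by (rule fact_sq)
  also have "\<dots> \<le> n^(q*k+1) * n^(q*k+1)" using f1 by (intro mult_le_mono) auto
  also have "\<dots> = n^(2*(q*k)+2)"
  proof -
    have e: "(q*k+1)+(q*k+1) = 2*(q*k)+2" by simp
    show ?thesis by (simp only: power_add[symmetric] e)
  qed
  finally have "n^n \<le> n^(2*(q*k)+2)" .
  moreover have "1 < n" using n2 by simp
  ultimately have "n \<le> 2*(q*k)+2" using power_le_imp_le_exp by blast
  moreover have "1 \<le> q*k" using q1 k1 by simp
  ultimately show False using big by linarith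
qed




lemma perm_eq:
  assumes p1: "is_perm n \<pi>" and p2: "is_perm n \<pi>'" and lw: "length w = n" and di: "distinct_ints w"
   and c1: "covers w \<pi>" and c2: "covers w \<pi>'" and eqD: "\<And>t. t<n \<Longrightarrow> w!t = None \<Longrightarrow> \<pi>!t = \<pi>'!t"
  shows "\<pi> = \<pi>'"
proof (rule ccontr)
  assume ne: "\<pi> \<noteq> \<pi>'"
  have l1: "length \<pi> = n" and d1: "distinct \<pi>" and s1: "set \<pi> = {1..n}" using p1 by (auto simp: is_perm_def)
  have l2: "length \<pi>' = n" and d2: "distinct \<pi>'" and s2: "set \<pi>' = {1..n}" using p2 by (auto simp: is_perm_def)
  define D where "D = {\<pi>!t | t. t<n \<and> \<pi>!t \<noteq> \<pi>'!t}"
  have "\<exists>t<n. \<pi>!t \<noteq> \<pi>'!t"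
  proof (rule ccontr)
    assume "\<not> (\<exists>t<n. \<pi>!t \<noteq> \<pi>'!t)"
    then have "\<pi> = \<pi>'" using l1 l2 by (intro nth_equalityI) auto
    then show False using ne by simp
  qed
  then have Dne: "D \<noteq> {}" unfolding D_def by blast
  have finD: "finite D" unfolding D_def by simp
  define v where "v = Min D"
  have "v \<in> D" unfolding v_def using finD Dne by (rule Min_in)
  then obtain j where j: "j < n" "\<pi>!j = v" "\<pi>!j \<noteq> \<pi>'!j" unfolding D_def by blast
  have vmin: "\<And>x. x \<in> D \<Longrightarrow> v \<le> x" unfolding v_def using finD by simp
  obtain a where a: "w!j = Some a" using eqD j by (cases "w!j") auto
  have "v \<in> set \<pi>'" using j l1 s1 s2 by (metis nth_mem)
  then obtain j' where j': "j' < n" "\<pi>'!j' = v" using l2 by (metis in_set_conv_nth)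
  have jj: "j' \<noteq> j" using j j' by auto
  have pj': "\<pi>!j' \<noteq> v"
  proof
    assume "\<pi>!j' = v"
    then have "\<pi>!j' = \<pi>!j" using j by simp
    then show False using jj j j' nth_eq_iff_index_eq[OF d1, of j' j] l1 by simp
  qed
  obtain b where b: "w!j' = Some b"
  proof (cases "w!j'")
    case None
    then have "\<pi>!j' = v" using eqD j' by simp
    then show ?thesis using pj' by simp
  qed
  have "\<pi>!j' \<in> D" unfolding D_def using j' pj' by auto
  then have "v < \<pi>!j'" using vmin pj' by (simp add: order_le_neq_trans)
  have ab: "a < b"
  proof -
    have "a \<noteq> b" using di a b jj lw j j' unfolding distinct_ints_def by force
    moreover have "\<not> b < a"
    proof
      assume "b < a"
      then have "\<pi>!j' < \<pi>!j" using L1[OF c1 lw j'(1) j(1) b a] by simp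
      then show False using \<open>v < \<pi>!j'\<close> j by simp
    qed
    ultimately show ?thesis by simp
  qed
  have "\<pi>'!j < \<pi>'!j'" using L1[OF c2 lw j(1) j'(1) a b ab] .
  then have wv: "\<pi>'!j < v" using j' by simp
  have "\<pi>'!j \<in> set \<pi>" using j l2 s1 s2 by (metis nth_mem)
  then obtain l where l: "l < n" "\<pi>!l = \<pi>'!j" using l1 by (metis in_set_conv_nth)
  have "\<pi>!l \<notin> D" using vmin wv l by force
  then have "\<pi>!l = \<pi>'!l" unfolding D_def using l by blast
  then have "\<pi>'!l = \<pi>'!j" using l by simp
  then have "l = j" using d2 l2 l j by (simp add: nth_eq_iff_index_eq)
  then show False using l j wv by simp
qed




theorem theorem4:
  fixes n :: nat and u :: "letter list"
  assumes "up_word n u" and "\<not> trivial_word u"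
  shows "n \<le> 3 * count_list u None + 1"
proof -
  interpret UW n u by (rule upw_UW[OF assms(1)])
  note U = assms(1)[unfolded up_word_def]
  define N where "N = length u"
  define f where "f = count_list u None"
  have f1: "1 \<le> f" using U count_list_0_iff[of u None] unfolding f_def by auto
  show ?thesis
  proof (cases "n \<le> f + 2")
    case True then show ?thesis using f1 unfolding f_def by linarith
  next
    case False
    then have n2: "2 \<le> n" and nbig: "f + 3 \<le> n" by auto
    have clF: "\<And>p. u!p = None \<Longrightarrow> p + n < N \<Longrightarrow> u!(p+n) = None"
    proof (rule ccontr)
      fix p assume p: "u!p = None" "p + n < N" "u!(p+n) \<noteq> None"
      then obtain c where "u!(p+n) = Some c" by auto
      then have "n \<le> f + 2" using FR[of p c] p n2 unfolding f_def N_def by blast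
      then show False using False by simp
    qed
    have clB: "\<And>p. u!p = None \<Longrightarrow> p < N \<Longrightarrow> n \<le> p \<Longrightarrow> u!(p-n) = None"
    proof (rule ccontr)
      fix p assume p: "u!p = None" "p < N" "n \<le> p" "u!(p-n) \<noteq> None"
      then obtain c where "u!(p-n) = Some c" by auto
      then have "n \<le> f + 2" using BR[of p c] p n2 unfolding f_def N_def by blast
      then show False using False by simp
    qed
    have shift: "\<And>i. i + n < N \<Longrightarrow> (u!i = None \<longleftrightarrow> u!(i+n) = None)"
    proof -
      fix i assume i: "i + n < N"
      show "u!i = None \<longleftrightarrow> u!(i+n) = None"
        using clF[OF _ i] clB[of "i+n"] i by auto
    qed
    define g where "g j = (if u!j = None then 1 else 0 :: nat)" for j
    define cnt where "cnt i = (\<Sum>t<n. g (i+t))" for i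
    define k where "k = cnt 0"
    have win: "\<And>i. i + n \<le> N \<Longrightarrow> cnt i = k"
    proof -
      fix i show "i + n \<le> N \<Longrightarrow> cnt i = k"
      proof (induct i)
        case 0 then show ?case by (simp add: k_def)
      next
        case (Suc i)
        then have ih: "cnt i = k" by simp
        have "(\<Sum>t<Suc n. g (i+t)) = g (i+0) + (\<Sum>t<n. g (i + Suc t))" by (rule sum.lessThan_Suc_shift)
        moreover have "(\<Sum>t<Suc n. g (i+t)) = (\<Sum>t<n. g (i+t)) + g (i+n)" by simp
        moreover have "g (i+0) = g (i+n)" using shift[of i] Suc.prems by (simp add: g_def)
        ultimately have "(\<Sum>t<n. g (i + Suc t)) = cnt i" unfolding cnt_def by linarith
        moreover have "(\<Sum>t<n. g (i + Suc t)) = cnt (Suc i)" unfolding cnt_def by simp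
        ultimately show ?case using ih by simp
      qed
    qed
    have cntc: "\<And>i. cnt i = card {t. t<n \<and> u!(i+t) = None}"
      unfolding cnt_def g_def by (simp add: card_as_sum)
    obtain p where p: "p < N" "u!p = None" using U unfolding N_def by (metis in_set_conv_nth)
    have k1: "1 \<le> k"
    proof -
      define i where "i = (if p + n \<le> N then p else N - n)"
      have i: "i + n \<le> N" "i \<le> p" "p - i < n" using p len n2 unfolding i_def N_def by auto
      have "p - i \<in> {t. t<n \<and> u!(i+t) = None}" using i p by auto
      then have "0 < card {t. t<n \<and> u!(i+t) = None}" by (auto simp: card_gt_0_iff)
      then show ?thesis using win[OF i(1)] cntc by simp
    qed
    define q where "q = N div n"
    have q1: "1 \<le> q"
    proof -
      have "n div n \<le> N div n" using len unfolding N_def by (rule div_le_mono)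
      then show ?thesis using n2 unfolding q_def by simp
    qed
    have blocks: "\<And>b. b * n \<le> N \<Longrightarrow> (\<Sum>j<b*n. g j) = b * k"
    proof -
      fix b show "b * n \<le> N \<Longrightarrow> (\<Sum>j<b*n. g j) = b * k"
      proof (induct b)
        case 0 then show ?case by simp
      next
        case (Suc b)
        have "(\<Sum>j<Suc b * n. g j) = (\<Sum>j<b*n + n. g j)" by (simp add: add.commute)
        also have "\<dots> = (\<Sum>j<b*n. g j) + (\<Sum>t<n. g (b*n+t))" by (rule sum_split_add)
        also have "(\<Sum>t<n. g (b*n+t)) = cnt (b*n)" by (simp add: cnt_def)
        also have "cnt (b*n) = k" using win Suc.prems by simp
        finally show ?case using Suc by simp
      qed
    qed
    have fqk: "q * k \<le> f"
    proof -
      have qn: "q * n \<le> N" unfolding q_def using div_mult_mod_eq[of N n] by linarith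
      have "f = card {j. j < N \<and> None = u!j}"
        unfolding f_def N_def by (simp add: count_list_eq_length_filter length_filter_conv_card)
      also have "{j. j < N \<and> None = u!j} = {j. j < N \<and> u!j = None}" by auto
      also have "card \<dots> = (\<Sum>j<N. g j)" unfolding g_def by (rule card_as_sum)
      also have "N = q*n + (N - q*n)" using qn by simp
      also have "(\<Sum>j<q*n + (N - q*n). g j) = (\<Sum>j<q*n. g j) + (\<Sum>t<N - q*n. g (q*n+t))" by (rule sum_split_add)
      finally show ?thesis using blocks[OF qn] by simp
    qed
    define m where "m = N - n + 1"
    define P where "P = {\<pi>. is_perm n \<pi>}"
    have cardP: "card P = fact n"
    proof -
      have "P = {xs. length xs = n \<and> distinct xs \<and> set xs \<subseteq> {1..n}}"
      proof (rule set_eqI, rule iffI)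
        fix xs assume "xs \<in> P" then show "xs \<in> {xs. length xs = n \<and> distinct xs \<and> set xs \<subseteq> {1..n}}"
          by (auto simp: P_def is_perm_def)
      next
        fix xs assume xs: "xs \<in> {xs. length xs = n \<and> distinct xs \<and> set xs \<subseteq> {1..n}}"
        then have "card (set xs) = card {1..n}" by (simp add: distinct_card)
        then have "set xs = {1..n}" using xs by (intro card_subset_eq[OF finite_atLeastAtMost]) auto
        then show "xs \<in> P" using xs by (simp add: P_def is_perm_def)
      qed
      also have "card \<dots> = \<Prod>{card {1..n} - n + 1..card {1..n}}"
        by (rule card_lists_distinct_length_eq) auto
      also have "\<dots> = \<Prod>{1..n}" by simp
      also have "\<dots> = fact n" by (simp add: fact_prod)
      finally show ?thesis .
    qed
    define ix where "ix \<pi> = (THE i. i + n \<le> length u \<and> covers (factor u n i) \<pi>)" for \<pi>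
    have ixP: "\<And>\<pi>. \<pi> \<in> P \<Longrightarrow> ix \<pi> + n \<le> N \<and> covers (factor u n (ix \<pi>)) \<pi>"
    proof -
      fix \<pi> assume "\<pi> \<in> P"
      then have "card {i. i + n \<le> length u \<and> covers (factor u n i) \<pi>} = 1" using U by (simp add: P_def)
      then obtain i0 where i0: "{i. i + n \<le> length u \<and> covers (factor u n i) \<pi>} = {i0}" by (rule card_1_singletonE)
      then have "ix \<pi> = i0" unfolding ix_def by (intro the_equality) auto
      then show "ix \<pi> + n \<le> N \<and> covers (factor u n (ix \<pi>)) \<pi>" using i0 unfolding N_def by auto
    qed
    define \<phi> where "\<phi> \<pi> = (ix \<pi>, map (\<lambda>t. \<pi>!t) (filter (\<lambda>t. u!(ix \<pi> + t) = None) [0..<n]))" for \<pi>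
    define Tg where "Tg = {..<m} \<times> {xs. set xs \<subseteq> {1..n} \<and> length xs = k}"
    have lenfil: "\<And>i. length (filter (\<lambda>t. u!(i + t) = None) [0..<n]) = cnt i"
    proof -
      fix i
      have "length (filter (\<lambda>t. u!(i + t) = None) [0..<n]) = card {t. t < length [0..<n] \<and> u!(i + [0..<n]!t) = None}"
        by (rule length_filter_conv_card)
      also have "{t. t < length [0..<n] \<and> u!(i + [0..<n]!t) = None} = {t. t<n \<and> u!(i+t) = None}" by auto
      finally show "length (filter (\<lambda>t. u!(i + t) = None) [0..<n]) = cnt i" using cntc by simp
    qed
    have img: "\<phi> ` P \<subseteq> Tg"
    proof
      fix z assume "z \<in> \<phi> ` P"
      then obtain \<pi> where pi: "\<pi> \<in> P" "z = \<phi> \<pi>" by blast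
      have ix: "ix \<pi> + n \<le> N" using ixP[OF pi(1)] by simp
      have "ix \<pi> < m" using ix unfolding m_def by simp
      moreover have "set (map (\<lambda>t. \<pi>!t) (filter (\<lambda>t. u!(ix \<pi> + t) = None) [0..<n])) \<subseteq> {1..n}"
      proof
        fix v assume "v \<in> set (map (\<lambda>t. \<pi>!t) (filter (\<lambda>t. u!(ix \<pi> + t) = None) [0..<n]))"
        then obtain t where t: "t < n" "v = \<pi>!t" by auto
        have "length \<pi> = n" "set \<pi> = {1..n}" using pi(1) by (auto simp: P_def is_perm_def)
        then show "v \<in> {1..n}" using t nth_mem[of t \<pi>] by auto
      qed
      moreover have "length (map (\<lambda>t. \<pi>!t) (filter (\<lambda>t. u!(ix \<pi> + t) = None) [0..<n])) = k"
        using lenfil win[OF ix] by simp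
      ultimately show "z \<in> Tg" using pi unfolding Tg_def \<phi>_def by auto
    qed
    have inj: "inj_on \<phi> P"
    proof (rule inj_onI)
      fix \<pi> \<pi>' assume h: "\<pi> \<in> P" "\<pi>' \<in> P" "\<phi> \<pi> = \<phi> \<pi>'"
      then have eqi: "ix \<pi> = ix \<pi>'" by (simp add: \<phi>_def)
      define i where "i = ix \<pi>"
      have m: "map (\<lambda>t. \<pi>!t) (filter (\<lambda>t. u!(i + t) = None) [0..<n]) = map (\<lambda>t. \<pi>'!t) (filter (\<lambda>t. u!(i + t) = None) [0..<n])"
        using h(3) eqi unfolding \<phi>_def i_def by simp
      have i1: "i + n \<le> N" "covers (factor u n i) \<pi>" using ixP[OF h(1)] unfolding i_def by auto
      have i2: "covers (factor u n i) \<pi>'" using ixP[OF h(2)] eqi unfolding i_def by auto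
      show "\<pi> = \<pi>'"
      proof (rule perm_eq)
        show "is_perm n \<pi>" "is_perm n \<pi>'" using h by (auto simp: P_def)
        show "length (factor u n i) = n" using factor_len i1 unfolding N_def by simp
        show "distinct_ints (factor u n i)" using U i1 unfolding N_def by blast
        show "covers (factor u n i) \<pi>" "covers (factor u n i) \<pi>'" using i1 i2 by auto
      next
        fix t assume t: "t < n" "factor u n i ! t = None"
        then have "u!(i+t) = None" using factor_nth i1 unfolding N_def by simp
        then have "t \<in> set (filter (\<lambda>t. u!(i + t) = None) [0..<n])" using t by simp
        then show "\<pi>!t = \<pi>'!t" using m by (simp add: map_eq_conv)
      qed
    qed
    have cardTg: "card Tg = m * n^k"
      unfolding Tg_def by (simp add: card_cartesian_product card_lists_length_eq)
    have finTg: "finite Tg" unfolding Tg_def by (simp add: finite_lists_length_eq)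
    have "card P \<le> card Tg" by (rule card_inj_on_le[OF inj img finTg])
    then have fa0: "fact n \<le> m * n^k" using cardP cardTg by simp
    have "m \<le> q * n"
    proof -
      have "N = q * n + N mod n" unfolding q_def by simp
      moreover have "N mod n < n" using n2 by simp
      ultimately show ?thesis unfolding m_def using len N_def by linarith
    qed
    then have "m * n^k \<le> q * n * n^k" by (rule mult_le_mono1)
    then have fa: "fact n \<le> q * n * n^k" using fa0 by linarith
    show ?thesis
    proof (rule ccontr)
      assume "\<not> n \<le> 3 * count_list u None + 1"
      then have "3 * (q*k) + 2 \<le> n" using fqk unfolding f_def by linarith
      then show False using arith_final[OF n2 k1 q1 fa] by blast
    qed
  qed
qed


end
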